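(* Let $E$ be a finite nonempty set, $f:2^E\to\mathbb{N}$ an integral polymatroid rank function, $\vec t\in\mathbb{N}^E$, and let $C_e:\mathbb{N}\times\mathbb{N}\to\mathbb{R}_+$, $e\in E$, be regular functions. Let $D\subseteq\mathbb{N}$ be a set of integers with $\mathbb{B}_f(d)\neq\emptyset$ for all $d\in D$. Then for every $d,d'\in D$ with $|d-d'|=1$ and every optimal solution $\vec x^*(\vec t,d)$ of $P(\vec t,d)$, there is an optimal solution $\vec x^*(\vec t,d')$ of $P(\vec t,d')$ with $\|\vec x^*(\vec t,d)-\vec x^*(\vec t,d')\|\le |d-d'|=1$.
   Context: $\mathbb{N}=\{0,1,2,\dots\}$. A set function $f:2^E\to\mathbb{N}$ is an integral polymatroid rank function if $f(\emptyset)=0$, $f$ is monotone and submodular. For $\vec x\in\mathbb{N}^E$, $x(U)=\sum_{e\in U}x_e$; $\mathbb{B}_f(d)=\{\vec x\in\mathbb{N}^E: x(U)\le f(U)\ \forall U\subseteq E,\ x(E)=d\}$. $P(\vec t,d)$: minimize $\sum_{e\in E}C_e(x_e;t_e)$ subject to $\vec x\in\mathbb{B}_f(d)$. $\|\cdot\|$ is the $L_1$-norm. For $C:\mathbb{N}\times\mathbb{N}\to\mathbb{R}$, $C^-(x;t)=C(x;t)-C(x-1;t)$ for $x\ge1$; $C$ is regular if $C^-(x;t)\le C^-(x;t+1)$ and $C^-(x;t+1)\le C^-(x+1;t)$ for all $x\ge1$, $t\in\mathbb{N}$. *)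

theory Defs
  imports Complex_Main
begin

definition polymatroid_rank :: "'a set \<Rightarrow> ('a set \<Rightarrow> nat) \<Rightarrow> bool" where
  "polymatroid_rank E f \<longleftrightarrow>
     f {} = 0 \<and>
     (\<forall>U V. U \<subseteq> V \<and> V \<subseteq> E \<longrightarrow> f U \<le> f V) \<and>
     (\<forall>U V. U \<subseteq> E \<and> V \<subseteq> E \<longrightarrow> f (U \<union> V) + f (U \<inter> V) \<le> f U + f V)"

text \<open>Integer vectors in N^E are functions vanishing outside E.\<close>
definition base_set :: "'a set \<Rightarrow> ('a set \<Rightarrow> nat) \<Rightarrow> nat \<Rightarrow> ('a \<Rightarrow> nat) set" where
  "base_set E f d = {x. (\<forall>e. e \<notin> E \<longrightarrow> x e = 0) \<and>
                        (\<forall>U. U \<subseteq> E \<longrightarrow> (\<Sum>e\<in>U. x e) \<le> f U) \<and>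
                        (\<Sum>e\<in>E. x e) = d}"

definition marg :: "(nat \<Rightarrow> nat \<Rightarrow> real) \<Rightarrow> nat \<Rightarrow> nat \<Rightarrow> real" where
  "marg C x t = C x t - C (x - 1) t"

definition regular :: "(nat \<Rightarrow> nat \<Rightarrow> real) \<Rightarrow> bool" where
  "regular C \<longleftrightarrow> (\<forall>x t. x \<ge> 1 \<longrightarrow>
      marg C x t \<le> marg C x (t + 1) \<and> marg C x (t + 1) \<le> marg C (x + 1) t)"

definition total_cost :: "'a set \<Rightarrow> ('a \<Rightarrow> nat \<Rightarrow> nat \<Rightarrow> real) \<Rightarrow> ('a \<Rightarrow> nat) \<Rightarrow> ('a \<Rightarrow> nat) \<Rightarrow> real" where
  "total_cost E C t x = (\<Sum>e\<in>E. C e (x e) (t e))"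

definition optimal :: "'a set \<Rightarrow> ('a set \<Rightarrow> nat) \<Rightarrow> ('a \<Rightarrow> nat \<Rightarrow> nat \<Rightarrow> real) \<Rightarrow> ('a \<Rightarrow> nat) \<Rightarrow> nat \<Rightarrow> ('a \<Rightarrow> nat) \<Rightarrow> bool" where
  "optimal E f C t d x \<longleftrightarrow> x \<in> base_set E f d \<and>
     (\<forall>y\<in>base_set E f d. total_cost E C t x \<le> total_cost E C t y)"

definition l1_dist :: "'a set \<Rightarrow> ('a \<Rightarrow> nat) \<Rightarrow> ('a \<Rightarrow> nat) \<Rightarrow> int" where
  "l1_dist E x y = (\<Sum>e\<in>E. \<bar>int (x e) - int (y e)\<bar>)"

end

theory Submission
  imports Defs "HOL-Library.FuncSet"
begin

lemma sum_upd:
  fixes F :: "'a \<Rightarrow> 'b \<Rightarrow> 'c::ab_group_add"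
  assumes "finite U"
  shows "(\<Sum>i\<in>U. F i ((x(a:=c)) i)) = (\<Sum>i\<in>U. F i (x i)) + (if a \<in> U then F a c - F a (x a) else 0)"
proof (cases "a \<in> U")
  case True
  have "(\<Sum>i\<in>U. F i ((x(a:=c)) i)) = F a c + (\<Sum>i\<in>U-{a}. F i ((x(a:=c)) i))"
    using sum.remove[OF assms True, of "\<lambda>i. F i ((x(a:=c)) i)"] by simp
  also have "(\<Sum>i\<in>U-{a}. F i ((x(a:=c)) i)) = (\<Sum>i\<in>U-{a}. F i (x i))"
    by (rule sum.cong) auto
  also have "(\<Sum>i\<in>U. F i (x i)) = F a (x a) + (\<Sum>i\<in>U-{a}. F i (x i))"
    using sum.remove[OF assms True, of "\<lambda>i. F i (x i)"] by simp
  ultimately show ?thesis using True by (simp add: algebra_simps)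
next
  case False
  then show ?thesis by (auto intro: sum.cong)
qed

lemma sum_upd2:
  fixes F :: "'a \<Rightarrow> 'b \<Rightarrow> 'c::ab_group_add"
  assumes "finite U" "a \<noteq> b" "a \<in> U" "b \<in> U"
  shows "(\<Sum>i\<in>U. F i ((x(a:=c, b:=d)) i)) = (\<Sum>i\<in>U. F i (x i)) + (F a c - F a (x a)) + (F b d - F b (x b))"
  using sum_upd[OF assms(1), of F "x(a:=c)" b d] sum_upd[OF assms(1), of F x a c] assms
  by simp

lemma sum_upd_nat:
  assumes "finite U"
  shows "int (sum (x(a:=c)) U) = int (sum x U) + (if a \<in> U then int c - int (x a) else 0)"
  using sum_upd[OF assms, of "\<lambda>i n. int n" x a c] by (simp add: of_nat_sum)

declare of_nat_sum[simp del]

lemma marg_mono: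
  assumes "regular C" "1 \<le> x" "x \<le> y"
  shows "marg C x s \<le> marg C y s"
  using assms(3)
proof (induction y rule: dec_induct)
  case base then show ?case by simp
next
  case (step n)
  have "marg C n s \<le> marg C n (s+1)" "marg C n (s+1) \<le> marg C (n+1) s"
    using assms(1,2) step(1) unfolding regular_def by auto
  then show ?case using step by simp
qed

lemma conv_ex:
  assumes "regular C" "a < b"
  shows "C (a+1) s + C (b-1) s \<le> C a s + C b s"
proof -
  have "marg C (a+1) s \<le> marg C b s" using marg_mono[OF assms(1), of "a+1" b s] assms by simp
  then show ?thesis unfolding marg_def by simp
qed

definition inP :: "'a set \<Rightarrow> ('a set \<Rightarrow> nat) \<Rightarrow> ('a \<Rightarrow> nat) \<Rightarrow> bool" where
  "inP E f z \<longleftrightarrow> (\<forall>i. i \<notin> E \<longrightarrow> z i = 0) \<and> (\<forall>U. U \<subseteq> E \<longrightarrow> sum z U \<le> f U)"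

lemma base_iff: "z \<in> base_set E f d \<longleftrightarrow> inP E f z \<and> sum z E = d"
  unfolding base_set_def inP_def by auto

lemma tight_ui:
  assumes "finite E" "polymatroid_rank E f" "inP E f z" "A \<subseteq> E" "B \<subseteq> E"
    "sum z A = f A" "sum z B = f B"
  shows "sum z (A \<union> B) = f (A \<union> B) \<and> sum z (A \<inter> B) = f (A \<inter> B)"
proof -
  have fA: "finite A" "finite B" using assms finite_subset by auto
  have "sum z (A \<union> B) + sum z (A \<inter> B) = sum z A + sum z B" using sum.union_inter[OF fA] .
  moreover have "f (A \<union> B) + f (A \<inter> B) \<le> f A + f B" using assms(2,4,5) unfolding polymatroid_rank_def by auto
  moreover have "sum z (A \<union> B) \<le> f (A \<union> B)" "sum z (A \<inter> B) \<le> f (A \<inter> B)"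
    using assms(3,4,5) unfolding inP_def by (auto dest: le_infI1)
  ultimately show ?thesis using assms(6,7) by linarith
qed

lemma exchange:
  assumes fin: "finite E" and pm: "polymatroid_rank E f"
    and reg: "\<And>i. i \<in> E \<Longrightarrow> regular (C i)"
    and u: "u \<in> base_set E f k" and v: "v \<in> base_set E f (Suc k)"
  shows "\<exists>a b. a \<in> base_set E f (Suc k) \<and> b \<in> base_set E f k \<and>
    total_cost E C t a + total_cost E C t b \<le> total_cost E C t u + total_cost E C t v \<and>
    ((l1_dist E u a \<le> 1 \<and> l1_dist E v b \<le> 1) \<or>
     (l1_dist E u a + 2 = l1_dist E u v \<and> l1_dist E v b + 2 = l1_dist E v u))"
proof -
  have uP: "inP E f u" and us: "sum u E = k" and vP: "inP E f v" and vs: "sum v E = Suc k"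
    using u v by (auto simp: base_iff)
  have u0: "\<And>i. i \<notin> E \<Longrightarrow> u i = 0" and ub: "\<And>U. U \<subseteq> E \<Longrightarrow> sum u U \<le> f U"
    using uP unfolding inP_def by auto
  have v0: "\<And>i. i \<notin> E \<Longrightarrow> v i = 0" and vb: "\<And>U. U \<subseteq> E \<Longrightarrow> sum v U \<le> f U"
    using vP unfolding inP_def by auto
  obtain e where eE: "e \<in> E" and euv: "u e < v e"
  proof (rule ccontr)
    assume "\<not> thesis"
    then have "\<forall>i\<in>E. v i \<le> u i" using that by force
    then have "sum v E \<le> sum u E" by (simp add: sum_mono)
    then show False using us vs by simp
  qed
  have finU: "\<And>U. U \<subseteq> E \<Longrightarrow> finite U" using fin finite_subset by auto
  show ?thesis
  proof (cases "inP E f (u(e := u e + 1))")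
    case True
    define a where "a = u(e := u e + 1)"
    define b where "b = v(e := v e - 1)"
    have sa: "int (sum a U) = int (sum u U) + (if e \<in> U then 1 else 0)" if "finite U" for U
      using sum_upd_nat[OF that, of u e "u e + 1"] unfolding a_def by simp
    have sb: "int (sum b U) = int (sum v U) - (if e \<in> U then 1 else 0)" if "finite U" for U
      using sum_upd_nat[OF that, of v e "v e - 1"] euv unfolding b_def by (simp add: of_nat_diff)
    have aB: "a \<in> base_set E f (Suc k)"
    proof -
      have "int (sum a E) = int (Suc k)" using sa[OF fin] eE us by (simp del: of_nat_sum)
      then show ?thesis using True unfolding base_iff a_def[symmetric] by (simp only: of_nat_eq_iff)
    qed
    have "inP E f b" unfolding inP_def
    proof safe
      fix i assume "i \<notin> E" then show "b i = 0" using v0 eE unfolding b_def by auto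
    next
      fix U assume U: "U \<subseteq> E"
      have "int (sum b U) \<le> int (f U)" using sb[OF finU[OF U]] vb[OF U] by auto
      then show "sum b U \<le> f U" by simp
    qed
    moreover have "int (sum b E) = int k" using sb[OF fin] eE vs by (simp del: of_nat_sum)
    ultimately have bB: "b \<in> base_set E f k" unfolding base_iff by (simp only: of_nat_eq_iff)
    have ca: "total_cost E C t a = total_cost E C t u + (C e (u e + 1) (t e) - C e (u e) (t e))"
      using sum_upd[OF fin, of "\<lambda>i n. C i n (t i)" u e "u e + 1"] eE
      unfolding total_cost_def a_def by simp
    have cb: "total_cost E C t b = total_cost E C t v + (C e (v e - 1) (t e) - C e (v e) (t e))"
      using sum_upd[OF fin, of "\<lambda>i n. C i n (t i)" v e "v e - 1"] eE
      unfolding total_cost_def b_def by simp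
    have cc: "C e (u e + 1) (t e) + C e (v e - 1) (t e) \<le> C e (u e) (t e) + C e (v e) (t e)"
      using conv_ex[OF reg[OF eE] euv] by simp
    have da: "l1_dist E u a = 1"
      using sum_upd[OF fin, of "\<lambda>i n. \<bar>int (u i) - int n\<bar>" u e "u e + 1"] eE
      unfolding l1_dist_def a_def by simp
    have db: "l1_dist E v b = 1"
      using sum_upd[OF fin, of "\<lambda>i n. \<bar>int (v i) - int n\<bar>" v e "v e - 1"] eE euv
      unfolding l1_dist_def b_def by simp
    show ?thesis
      apply (rule exI[of _ a], rule exI[of _ b])
      using aB bB ca cb cc da db by simp
  next
    case False
    have "\<forall>i. i \<notin> E \<longrightarrow> (u(e := u e + 1)) i = 0" using u0 eE by auto
    then obtain U where U: "U \<subseteq> E" "sum (u(e := u e + 1)) U > f U"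
      using False unfolding inP_def by (auto simp: not_le)
    have "int (sum (u(e := u e + 1)) U) = int (sum u U) + (if e \<in> U then 1 else 0)"
      using sum_upd_nat[OF finU[OF U(1)], of u e "u e + 1"] by simp
    then have eU: "e \<in> U" and Ut: "sum u U = f U" using U ub[OF U(1)] by (auto split: if_splits)
    obtain T where T: "T \<subseteq> E" "sum u T = f T" "e \<in> T"
      and Tmin0: "\<And>W. W \<subseteq> E \<and> sum u W = f W \<and> e \<in> W \<Longrightarrow> card T \<le> card W"
      using ex_has_least_nat[of "\<lambda>T. T \<subseteq> E \<and> sum u T = f T \<and> e \<in> T" U card] U(1) eU Ut
      by blast
    have Tmin: "T \<subseteq> W" if "W \<subseteq> E" "sum u W = f W" "e \<in> W" for W
    proof -
      have "sum u (T \<inter> W) = f (T \<inter> W)" using tight_ui[OF fin pm uP T(1) that(1) T(2) that(2)] by simp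
      then have "card T \<le> card (T \<inter> W)" using Tmin0[of "T \<inter> W"] T that by auto
      then have "T \<inter> W = T" using card_subset_eq[OF finU[OF T(1)], of "T \<inter> W"]
        card_mono[OF finU[OF T(1)], of "T \<inter> W"] by auto
      then show ?thesis by blast
    qed
    have pe: "polymatroid_rank E f" by (rule pm)
    have f0: "f {} = 0" using pm unfolding polymatroid_rank_def by simp
    obtain W where W: "W \<subseteq> E" "sum v W = f W" "e \<notin> W"
      and Wmax0: "\<And>W'. W' \<subseteq> E \<and> sum v W' = f W' \<and> e \<notin> W' \<Longrightarrow> card E - card W \<le> card E - card W'"
      using ex_has_least_nat[of "\<lambda>W. W \<subseteq> E \<and> sum v W = f W \<and> e \<notin> W" "{}" "\<lambda>W. card E - card W"] f0
      by auto
    have Wmax: "W' \<subseteq> W" if "W' \<subseteq> E" "sum v W' = f W'" "e \<notin> W'" for W'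
    proof -
      have "sum v (W \<union> W') = f (W \<union> W')" using tight_ui[OF fin pm vP W(1) that(1) W(2) that(2)] by simp
      then have "card E - card W \<le> card E - card (W \<union> W')" using Wmax0[of "W \<union> W'"] W that by auto
      moreover have "card (W \<union> W') \<le> card E" using card_mono[OF fin] W(1) that(1) by auto
      moreover have "card W \<le> card (W \<union> W')" using card_mono[OF finU[of "W \<union> W'"]] W(1) that(1) by auto
      ultimately have "card (W \<union> W') = card W" by linarith
      then have "W \<union> W' = W" using card_subset_eq[OF finU[of "W \<union> W'"], of W] W(1) that(1) by auto
      then show ?thesis by blast
    qed
    obtain e' where e'T: "e' \<in> T" and e'W: "e' \<notin> W" and e'uv: "v e' < u e'"
    proof (rule ccontr)
      assume "\<not> thesis"
      then have le: "\<forall>i\<in>T-W. u i \<le> v i" using that by force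
      have finT: "finite (T - W)" using finU[OF T(1)] by simp
      have lt: "sum u (T - W) < sum v (T - W)"
        using sum_strict_mono_ex1[OF finT le] euv T(3) W(3) by auto
      have "f (T \<union> W) + f (T \<inter> W) \<le> f T + f W" using pm T(1) W(1) unfolding polymatroid_rank_def by auto
      moreover have "sum v (T \<union> W) \<le> f (T \<union> W)" using vb T(1) W(1) by auto
      moreover have "sum u (T \<inter> W) \<le> f (T \<inter> W)" using ub T(1) by (meson Int_lower1 order_trans)
      moreover have "sum v (T \<union> W) = sum v W + sum v (T - W)"
        using sum.Int_Diff[OF finU[of "T \<union> W"], of v W] T(1) W(1)
        by (simp add: Int_absorb1 Un_Diff)
      moreover have "sum u T = sum u (T \<inter> W) + sum u (T - W)"
        using sum.Int_Diff[OF finU[OF T(1)], of u W] by simp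
      ultimately show False using lt T(2) W(2) by linarith
    qed
    have e'E: "e' \<in> E" using e'T T(1) by auto
    have ne: "e \<noteq> e'" using euv e'uv by auto
    define a where "a = v(e := v e - 1, e' := v e' + 1)"
    define b where "b = u(e := u e + 1, e' := u e' - 1)"
    have sa: "int (sum a U) = int (sum v U) - (if e \<in> U then 1 else 0) + (if e' \<in> U then 1 else 0)"
      if "finite U" for U
      using sum_upd_nat[OF that, of "v(e := v e - 1)" e' "v e' + 1"]
        sum_upd_nat[OF that, of v e "v e - 1"] euv ne unfolding a_def by (simp add: of_nat_diff)
    have sb: "int (sum b U) = int (sum u U) + (if e \<in> U then 1 else 0) - (if e' \<in> U then 1 else 0)"
      if "finite U" for U
      using sum_upd_nat[OF that, of "u(e := u e + 1)" e' "u e' - 1"]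
        sum_upd_nat[OF that, of u e "u e + 1"] e'uv ne unfolding b_def by (simp add: of_nat_diff)
    have "inP E f a" unfolding inP_def
    proof safe
      fix i assume "i \<notin> E" then show "a i = 0" using v0 eE e'E unfolding a_def by auto
    next
      fix U assume U: "U \<subseteq> E"
      have "int (sum a U) \<le> int (f U)"
      proof (cases "e' \<in> U \<and> e \<notin> U")
        case True
        have "sum v U + 1 \<le> f U"
        proof (rule ccontr)
          assume "\<not> ?thesis"
          then have "sum v U = f U" using vb[OF U] by simp
          then have "U \<subseteq> W" using Wmax[OF U] True by simp
          then show False using True e'W by auto
        qed
        then show ?thesis using sa[OF finU[OF U]] by simp
      next
        case False
        then show ?thesis using sa[OF finU[OF U]] vb[OF U] by auto
      qed
      then show "sum a U \<le> f U" by simp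
    qed
    moreover have "int (sum a E) = int (Suc k)" using sa[OF fin] eE e'E vs by (simp del: of_nat_sum)
    ultimately have aB: "a \<in> base_set E f (Suc k)" unfolding base_iff by (simp only: of_nat_eq_iff)
    have "inP E f b" unfolding inP_def
    proof safe
      fix i assume "i \<notin> E" then show "b i = 0" using u0 eE e'E unfolding b_def by auto
    next
      fix U assume U: "U \<subseteq> E"
      have "int (sum b U) \<le> int (f U)"
      proof (cases "e \<in> U \<and> e' \<notin> U")
        case True
        have "sum u U + 1 \<le> f U"
        proof (rule ccontr)
          assume "\<not> ?thesis"
          then have "sum u U = f U" using ub[OF U] by simp
          then have "T \<subseteq> U" using Tmin[OF U] True by simp
          then show False using True e'T by auto
        qed
        then show ?thesis using sb[OF finU[OF U]] by simp
      next
        case False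
        then show ?thesis using sb[OF finU[OF U]] ub[OF U] by auto
      qed
      then show "sum b U \<le> f U" by simp
    qed
    moreover have "int (sum b E) = int k" using sb[OF fin] eE e'E us by (simp del: of_nat_sum)
    ultimately have bB: "b \<in> base_set E f k" unfolding base_iff by (simp only: of_nat_eq_iff)
    have ca: "total_cost E C t a = total_cost E C t v + (C e (v e - 1) (t e) - C e (v e) (t e))
        + (C e' (v e' + 1) (t e') - C e' (v e') (t e'))"
      using sum_upd2[OF fin ne eE e'E, of "\<lambda>i n. C i n (t i)" v "v e - 1" "v e' + 1"]
      unfolding total_cost_def a_def by simp
    have cb: "total_cost E C t b = total_cost E C t u + (C e (u e + 1) (t e) - C e (u e) (t e))
        + (C e' (u e' - 1) (t e') - C e' (u e') (t e'))"
      using sum_upd2[OF fin ne eE e'E, of "\<lambda>i n. C i n (t i)" u "u e + 1" "u e' - 1"]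
      unfolding total_cost_def b_def by simp
    have cc: "C e (u e + 1) (t e) + C e (v e - 1) (t e) \<le> C e (u e) (t e) + C e (v e) (t e)"
      using conv_ex[OF reg[OF eE] euv] by simp
    have cc': "C e' (v e' + 1) (t e') + C e' (u e' - 1) (t e') \<le> C e' (v e') (t e') + C e' (u e') (t e')"
      using conv_ex[OF reg[OF e'E] e'uv] by simp
    have da: "l1_dist E u a + 2 = l1_dist E u v"
      using sum_upd2[OF fin ne eE e'E, of "\<lambda>i n. \<bar>int (u i) - int n\<bar>" v "v e - 1" "v e' + 1"] euv e'uv
      unfolding l1_dist_def a_def by simp
    have db: "l1_dist E v b + 2 = l1_dist E v u"
      using sum_upd2[OF fin ne eE e'E, of "\<lambda>i n. \<bar>int (v i) - int n\<bar>" u "u e + 1" "u e' - 1"] euv e'uv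
      unfolding l1_dist_def b_def by simp
    show ?thesis
      apply (rule exI[of _ a], rule exI[of _ b])
      using aB bB ca cb cc cc' da db by simp
  qed
qed

lemma base_finite:
  assumes fin: "finite E"
  shows "finite (base_set E f d)"
proof -
  have "base_set E f d \<subseteq> (\<lambda>g i. if i \<in> E then g i else 0) ` (PiE E (\<lambda>_. {..d}))"
  proof
    fix x assume x: "x \<in> base_set E f d"
    then have x0: "\<And>i. i \<notin> E \<Longrightarrow> x i = 0" and xs: "sum x E = d" unfolding base_set_def by auto
    have "\<And>i. i \<in> E \<Longrightarrow> x i \<le> d" using member_le_sum[of _ E x] fin xs by auto
    then have "restrict x E \<in> PiE E (\<lambda>_. {..d})" by (auto simp: PiE_iff)
    moreover have "x = (\<lambda>i. if i \<in> E then restrict x E i else 0)" using x0 by auto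
    ultimately show "x \<in> (\<lambda>g i. if i \<in> E then g i else 0) ` (PiE E (\<lambda>_. {..d}))" by blast
  qed
  moreover have "finite (PiE E (\<lambda>_. {..d::nat}))" using fin by (simp add: finite_PiE)
  ultimately show ?thesis using finite_subset by blast
qed

lemma opt_exists:
  assumes fin: "finite E" and ne: "base_set E f d \<noteq> {}"
  shows "\<exists>y. optimal E f C t d y"
proof -
  obtain m where m: "m \<in> total_cost E C t ` base_set E f d"
    "\<not> (\<exists>z\<in>total_cost E C t ` base_set E f d. z < m)"
    using ex_min_if_finite[of "total_cost E C t ` base_set E f d"] base_finite[OF fin] ne by blast
  then obtain y where "y \<in> base_set E f d" "m = total_cost E C t y" by blast
  then show ?thesis using m(2) unfolding optimal_def by (auto simp: not_less)
qed

lemma dist_nonneg: "0 \<le> l1_dist E x y" unfolding l1_dist_def by (simp add: sum_nonneg)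

lemma dist_sym: "l1_dist E x y = l1_dist E y x" unfolding l1_dist_def by (simp add: abs_minus_commute)

theorem theorem3p4:
  fixes E :: "'a set" and f :: "'a set \<Rightarrow> nat" and t :: "'a \<Rightarrow> nat"
    and C :: "'a \<Rightarrow> nat \<Rightarrow> nat \<Rightarrow> real" and D :: "nat set"
  assumes "finite E" and "E \<noteq> {}"
    and "polymatroid_rank E f"
    and "\<And>e x s. e \<in> E \<Longrightarrow> C e x s \<ge> 0"
    and "\<And>e. e \<in> E \<Longrightarrow> regular (C e)"
    and "\<And>d. d \<in> D \<Longrightarrow> base_set E f d \<noteq> {}"
  shows "\<forall>d\<in>D. \<forall>d'\<in>D. \<bar>int d - int d'\<bar> = 1 \<longrightarrow>
           (\<forall>x. optimal E f C t d x \<longrightarrow>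
              (\<exists>x'. optimal E f C t d' x' \<and> l1_dist E x x' \<le> \<bar>int d - int d'\<bar>))"
proof (intro ballI impI allI)
  fix d d' x assume dD: "d \<in> D" and d'D: "d' \<in> D" and dd: "\<bar>int d - int d'\<bar> = 1"
    and xo: "optimal E f C t d x"
  obtain y0 where "optimal E f C t d' y0" using opt_exists[OF assms(1) assms(6)[OF d'D]] by blast
  then obtain y where yo: "optimal E f C t d' y"
    and ymin: "\<And>z. optimal E f C t d' z \<Longrightarrow> nat (l1_dist E x y) \<le> nat (l1_dist E x z)"
    using ex_has_least_nat[of "optimal E f C t d'" y0 "\<lambda>z. nat (l1_dist E x z)"] by blast
  have xB: "x \<in> base_set E f d" and xle: "\<And>z. z \<in> base_set E f d \<Longrightarrow> total_cost E C t x \<le> total_cost E C t z"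
    using xo unfolding optimal_def by auto
  have yB: "y \<in> base_set E f d'" and yle: "\<And>z. z \<in> base_set E f d' \<Longrightarrow> total_cost E C t y \<le> total_cost E C t z"
    using yo unfolding optimal_def by auto
  have "l1_dist E x y \<le> 1"
  proof (cases "d' = Suc d")
    case True
    obtain a b where aB: "a \<in> base_set E f (Suc d)" and bB: "b \<in> base_set E f d"
      and c: "total_cost E C t a + total_cost E C t b \<le> total_cost E C t x + total_cost E C t y"
      and dis: "(l1_dist E x a \<le> 1 \<and> l1_dist E y b \<le> 1) \<or>
        (l1_dist E x a + 2 = l1_dist E x y \<and> l1_dist E y b + 2 = l1_dist E y x)"
      using exchange[where C=C and t=t, OF assms(1,3,5) xB yB[unfolded True]] by blast
    have ao: "optimal E f C t d' a" using aB c xle[OF bB] yle True unfolding optimal_def by fastforce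
    show ?thesis
    proof (cases "l1_dist E x a \<le> 1")
      case True
      then show ?thesis using ymin[OF ao] dist_nonneg[of E x a] dist_nonneg[of E x y] by linarith
    next
      case False
      then show ?thesis using dis ymin[OF ao] dist_nonneg[of E x a] by linarith
    qed
  next
    case False
    then have dS: "d = Suc d'" using dd by linarith
    obtain a b where aB: "a \<in> base_set E f (Suc d')" and bB: "b \<in> base_set E f d'"
      and c: "total_cost E C t a + total_cost E C t b \<le> total_cost E C t y + total_cost E C t x"
      and dis: "(l1_dist E y a \<le> 1 \<and> l1_dist E x b \<le> 1) \<or>
        (l1_dist E y a + 2 = l1_dist E y x \<and> l1_dist E x b + 2 = l1_dist E x y)"
      using exchange[where C=C and t=t, OF assms(1,3,5) yB xB[unfolded dS]] by blast
    have bo: "optimal E f C t d' b" using bB c xle aB yle dS unfolding optimal_def by fastforce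
    show ?thesis
    proof (cases "l1_dist E x b \<le> 1")
      case True
      then show ?thesis using ymin[OF bo] dist_nonneg[of E x b] dist_nonneg[of E x y] by linarith
    next
      case False
      then show ?thesis using dis ymin[OF bo] dist_nonneg[of E x b] by linarith
    qed
  qed
  then show "\<exists>x'. optimal E f C t d' x' \<and> l1_dist E x x' \<le> \<bar>int d - int d'\<bar>"
    using yo dd by auto
qed

end
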